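(* Let $q$ be a prime power and $n \ge 1$. For any function $\varphi : M_n(\mathbb{F}_q) \to \mathbb{R}$ of von Mangoldt type with coefficients $(c_\sigma)_{\sigma \in S_n}$, \[ \sum_{f \in M_n(\mathbb{F}_q)} \varphi(f) = \sum_{\sigma \in S_n} c_\sigma\, q^n. \]
   Context: $M_n(\mathbb{F}_q)$ is the set of monic degree-$n$ polynomials in $\mathbb{F}_q[x]$. For $(z_1,\dots,z_n) \in \overline{\mathbb{F}}_q^{\,n}$ and $\sigma \in S_n$, $\delta_\sigma(z_1,\dots,z_n) = 1$ if $\mathrm{Frob}_q(z_1,\dots,z_n) = \sigma(z_1,\dots,z_n)$ (Frobenius $z \mapsto z^q$ applied coordinatewise equals the permutation $\sigma$ of coordinates) and $0$ otherwise. $\varphi$ is of von Mangoldt type with coefficients $(c_\sigma)$ if $\varphi(f) = \sum_{(z_1,\dots,z_n) \in \overline{\mathbb{F}}_q^{\,n},\, f = \prod_i (x - z_i)} \sum_{\sigma \in S_n} c_\sigma \delta_\sigma(z_1,\dots,z_n)$ for all $f \in M_n(\mathbb{F}_q)$. *)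

theory Defs
  imports "HOL-Algebra.Algebraic_Closure_Type" "HOL-Combinatorics.Permutations" "HOL-Library.FuncSet"
begin

text \<open>Finite field F_q is a type 'a of class finite field; q = card (UNIV :: 'a set).
  Its algebraic closure is the type 'a alg_closure, with embedding to_ac.\<close>

definition monic_polys :: "nat \<Rightarrow> ('a::{finite,field}) poly set" where
  "monic_polys n = {f. degree f = n \<and> lead_coeff f = 1}"

definition root_tuples :: "nat \<Rightarrow> ('a::{finite,field}) poly \<Rightarrow> (nat \<Rightarrow> 'a alg_closure) set" where
  "root_tuples n f = {z \<in> PiE {..<n} (\<lambda>_. UNIV).
      map_poly to_ac f = (\<Prod>i<n. [:- z i, 1:])}"

definition perm_tuple :: "nat \<Rightarrow> (nat \<Rightarrow> nat) \<Rightarrow> (nat \<Rightarrow> 'b) \<Rightarrow> (nat \<Rightarrow> 'b)" where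
  "perm_tuple n \<sigma> z = (\<lambda>j\<in>{..<n}. z (inv_into UNIV \<sigma> j))"

definition delta :: "nat \<Rightarrow> (nat \<Rightarrow> nat) \<Rightarrow> (nat \<Rightarrow> ('a::{finite,field}) alg_closure) \<Rightarrow> real" where
  "delta n \<sigma> z = (if (\<lambda>j\<in>{..<n}. z j ^ card (UNIV :: 'a set)) = perm_tuple n \<sigma> z then 1 else 0)"

definition von_mangoldt_type ::
  "nat \<Rightarrow> (('a::{finite,field}) poly \<Rightarrow> real) \<Rightarrow> ((nat \<Rightarrow> nat) \<Rightarrow> real) \<Rightarrow> bool" where
  "von_mangoldt_type n \<phi> c \<longleftrightarrow>
     (\<forall>f\<in>monic_polys n. \<phi> f =
        (\<Sum>z\<in>root_tuples n f. \<Sum>\<sigma>\<in>{\<sigma>. \<sigma> permutes {..<n}}. c \<sigma> * delta n \<sigma> z))"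

end

theory Submission
  imports Defs "HOL-Combinatorics.Orbits" "HOL-Computational_Algebra.Primes"
begin

lemma ff_pow_card:
  fixes x :: "'a :: {finite,field}"
  shows "x ^ card (UNIV :: 'a set) = x"
proof (cases "x = 0")
  case False
  have "x * (\<Prod>y\<in>UNIV-{0}. x * y) = x * x ^ (card (UNIV :: 'a set) - 1) * \<Prod>(UNIV-{0})"
    by (simp add: prod.distrib mult_ac)
  also have "x * x ^ (card (UNIV :: 'a set) - 1) = x ^ Suc (card (UNIV :: 'a set) - 1)"
    by (subst power_Suc) auto
  also have "Suc (card (UNIV :: 'a set) - 1) = card (UNIV :: 'a set)"
    using finite_UNIV_card_ge_0[where ?'a = 'a] by simp
  also have "(\<Prod>y\<in>UNIV-{0}. x * y) = (\<Prod>y\<in>UNIV-{0}. y)"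
    by (rule prod.reindex_bij_witness[of _ "\<lambda>y. y / x" "\<lambda>y. x * y"]) (use False in auto)
  finally show ?thesis
    by simp
qed (use finite_UNIV_card_ge_0[where ?'a = 'a] in auto)

lemma ff_card_ge2: "card (UNIV :: ('a :: {finite,field}) set) \<ge> 2"
proof -
  have "{0, 1::'a} \<subseteq> UNIV" by simp
  hence "card {0, 1::'a} \<le> card (UNIV :: 'a set)" by (intro card_mono) auto
  thus ?thesis by simp
qed

lemma ff_CHAR_prime: "prime CHAR('a :: {finite,field})"
  by (intro prime_CHAR_semidom finite_imp_CHAR_pos) auto

lemma ff_inverse_of_nat:
  fixes y :: "'a :: {finite,field}"
  assumes "y \<noteq> 0"
  shows "y ^ (card (UNIV :: 'a set) - 2) * y = 1"
proof -
  have "y ^ (card (UNIV :: 'a set) - 2) * y * y = y ^ (card (UNIV :: 'a set) - 2 + 2)"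
    by (simp add: power_add power2_eq_square mult.assoc)
  also have "card (UNIV :: 'a set) - 2 + 2 = card (UNIV :: 'a set)"
    using ff_card_ge2[where 'a='a] by simp
  finally have "y ^ (card (UNIV :: 'a set) - 2) * y * y = y ^ card (UNIV :: 'a set)" .
  also have "\<dots> = y" by (rule ff_pow_card)
  finally show ?thesis using assms by simp
qed

definition addclosed :: "'a::ring_1 set \<Rightarrow> bool" where
  "addclosed H \<longleftrightarrow> 0 \<in> H \<and> (\<forall>x\<in>H. \<forall>y\<in>H. x + y \<in> H)"

lemma addclosed_of_nat:
  assumes "addclosed H" "h \<in> H"
  shows "of_nat k * h \<in> H"
  using assms by (induction k) (auto simp: addclosed_def distrib_right)

lemma of_nat_mod_CHAR: "(of_nat (n mod CHAR('a)) :: 'a :: ring_1) = of_nat n"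
proof -
  have "(of_nat n :: 'a) = of_nat (n mod CHAR('a) + CHAR('a) * (n div CHAR('a)))"
    by simp
  also have "\<dots> = of_nat (n mod CHAR('a))" by (simp only: of_nat_add of_nat_mult of_nat_CHAR) simp
  finally show ?thesis by simp
qed

lemma addclosed_uminus:
  fixes H :: "'a :: ring_1 set"
  assumes "addclosed H" "h \<in> H" "CHAR('a) > 0"
  shows "- h \<in> H"
proof -
  have "of_nat (CHAR('a) - 1) * h + h = of_nat (Suc (CHAR('a) - 1)) * h"
    by (simp add: distrib_right)
  also have "Suc (CHAR('a) - 1) = CHAR('a)" using assms(3) by simp
  finally have "of_nat (CHAR('a) - 1) * h + h = 0" by simp
  hence "of_nat (CHAR('a) - 1) * h = -h" by (simp add: eq_neg_iff_add_eq_0)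
  thus ?thesis using addclosed_of_nat[OF assms(1,2), of "CHAR('a) - 1"] by simp
qed


lemma char_pos_ff: "CHAR('a :: {finite,field}) > 0"
  by (intro finite_imp_CHAR_pos) auto

lemma addclosed_extend_inj_aux:
  fixes H :: "'a::{finite,field} set"
  assumes "addclosed H" "x \<notin> H" "h1 \<in> H" "h2 \<in> H" "i2 < i1" "i1 < CHAR('a)"
    and eq: "h1 + of_nat i1 * x = h2 + of_nat i2 * x"
  shows False
proof -
  define d where "d = i1 - i2"
  have i1: "(of_nat i1 :: 'a) = of_nat d + of_nat i2" using assms(5) by (simp add: d_def)
  have dx: "of_nat d * x = h2 + (- h1)" using eq unfolding i1 by (simp add: algebra_simps)
  have "h2 + (- h1) \<in> H"
    using assms(1,3,4) addclosed_uminus[OF assms(1) assms(3) char_pos_ff] by (auto simp: addclosed_def)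
  hence dxH: "of_nat d * x \<in> H" using dx by simp
  have "\<not> CHAR('a) dvd d" using assms(5,6) by (auto simp: d_def dest: dvd_imp_le)
  hence nz: "(of_nat d :: 'a) \<noteq> 0" by (simp add: of_nat_eq_0_iff_char_dvd)
  define e where "e = d ^ (card (UNIV :: 'a set) - 2)"
  have "(of_nat e :: 'a) * of_nat d = 1"
    unfolding e_def of_nat_power by (rule ff_inverse_of_nat[OF nz])
  hence "x = of_nat e * (of_nat d * x)" by (simp add: mult.assoc[symmetric])
  also have "\<dots> \<in> H" by (rule addclosed_of_nat[OF assms(1) dxH])
  finally show False using assms(2) by simp
qed

lemma addclosed_extend:
  fixes H :: "'a::{finite,field} set"
  assumes "addclosed H" "x \<notin> H"
  defines "H' \<equiv> (\<lambda>(h,i). h + of_nat i * x) ` (H \<times> {..<CHAR('a)})"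
  shows "addclosed H'" "card H' = CHAR('a) * card H" "x \<in> H'" "H \<subseteq> H'"
proof -
  have p2: "CHAR('a) \<ge> 2" using ff_CHAR_prime[where 'a='a] prime_ge_2_nat by blast
  have inj: "inj_on (\<lambda>(h,i). h + of_nat i * x) (H \<times> {..<CHAR('a)})"
  proof (rule inj_onI, clarsimp)
    fix h1 i1 h2 i2
    assume h: "h1 \<in> H" "i1 < CHAR('a)" "h2 \<in> H" "i2 < CHAR('a)"
      and eq: "h1 + of_nat i1 * x = h2 + of_nat i2 * x"
    show "h1 = h2 \<and> i1 = i2"
    proof (cases i1 i2 rule: linorder_cases)
      case less
      from addclosed_extend_inj_aux[OF assms(1,2) h(3) h(1) less h(4) eq[symmetric]] show ?thesis ..
    next
      case greater
      from addclosed_extend_inj_aux[OF assms(1,2) h(1) h(3) greater h(2) eq] show ?thesis ..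
    qed (use eq in auto)
  qed
  show "card H' = CHAR('a) * card H"
    unfolding H'_def by (subst card_image[OF inj]) (simp add: card_cartesian_product)
  show "x \<in> H'" unfolding H'_def
  proof (rule image_eqI[of _ _ "(0,1)"])
    show "(0, 1) \<in> H \<times> {..<CHAR('a)}" using assms(1) p2 by (auto simp: addclosed_def)
  qed simp
  show "H \<subseteq> H'" unfolding H'_def
  proof
    fix h assume "h \<in> H"
    thus "h \<in> (\<lambda>(h,i). h + of_nat i * x) ` (H \<times> {..<CHAR('a)})"
      using p2 by (intro image_eqI[of _ _ "(h,0)"]) auto
  qed
  show "addclosed H'"
    unfolding addclosed_def
  proof safe
    show "0 \<in> H'" unfolding H'_def
      using assms(1) p2 by (intro image_eqI[of _ _ "(0,0)"]) (auto simp: addclosed_def)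
  next
    fix a b assume "a \<in> H'" "b \<in> H'"
    then obtain h1 i1 h2 i2 where *: "h1 \<in> H" "h2 \<in> H" "i1 < CHAR('a)" "i2 < CHAR('a)"
      "a = h1 + of_nat i1 * x" "b = h2 + of_nat i2 * x" unfolding H'_def by auto
    have "a + b = (h1 + h2) + of_nat ((i1 + i2) mod CHAR('a)) * x"
      unfolding of_nat_mod_CHAR using * by (simp add: algebra_simps)
    moreover have "h1 + h2 \<in> H" using assms(1) * by (auto simp: addclosed_def)
    moreover have "(i1 + i2) mod CHAR('a) < CHAR('a)" using p2 by simp
    ultimately show "a + b \<in> H'" unfolding H'_def by (auto simp: image_iff)
  qed
qed

lemma ff_card_prime_power_aux:
  fixes H :: "'a::{finite,field} set"
  assumes "addclosed H" "card H = CHAR('a) ^ j"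
  shows "\<exists>k. card (UNIV :: 'a set) = CHAR('a) ^ k"
  using assms
proof (induction "card (UNIV - H)" arbitrary: H j rule: less_induct)
  case less
  show ?case
  proof (cases "H = UNIV")
    case True then show ?thesis using less.prems by auto
  next
    case False
    then obtain x where x: "x \<notin> H" by auto
    define H' where "H' \<equiv> (\<lambda>(h,i). h + of_nat i * x) ` (H \<times> {..<CHAR('a)})"
    note ext = addclosed_extend[OF less.prems(1) x, folded H'_def]
    have "card (UNIV - H') < card (UNIV - H)"
      by (rule psubset_card_mono) (use ext x in auto)
    moreover have "card H' = CHAR('a) ^ Suc j" using ext less.prems by simp
    ultimately show ?thesis using less.hyps ext(1) by blast
  qed
qed

lemma ff_card_prime_power: "\<exists>k. card (UNIV :: ('a::{finite,field}) set) = CHAR('a) ^ k"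
  by (rule ff_card_prime_power_aux[of "{0}" 0]) (auto simp: addclosed_def)


lemma card_roots_xN:
  fixes N :: nat
  assumes N2: "N \<ge> 2" and N0: "of_nat N = (0::'b::alg_closed_field)"
  shows "card {x::'b. x ^ N = x} = N"
proof -
  define P :: "'b poly" where "P = monom 1 N - [:0,1:]"
  have polyP: "poly P x = x ^ N - x" for x by (simp add: P_def poly_monom)
  have cN: "coeff P N = 1" using N2 by (simp add: P_def coeff_pCons split: nat.splits)
  have "degree P \<le> N" unfolding P_def
    by (rule degree_diff_le) (use N2 in \<open>auto simp: degree_monom_eq\<close>)
  moreover have "N \<le> degree P" by (rule le_degree) (simp add: cN)
  ultimately have degP: "degree P = N" by simp
  hence P0: "P \<noteq> 0" using N2 by auto
  have lcP: "lead_coeff P = 1" using degP cN by simp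
  obtain A where A: "size A = N" "P = smult 1 (\<Prod>x\<in>#A. [:-x, 1:])"
    using alg_closed_imp_factorization[OF P0] degP lcP by auto
  have PA: "P = (\<Prod>x\<in>#A. [:-x, 1:])" using A(2) by simp
  have roots: "{x. x ^ N = x} = set_mset A"
  proof -
    have "x ^ N = x \<longleftrightarrow> poly P x = 0" for x by (simp add: polyP)
    also have "poly P x = 0 \<longleftrightarrow> x \<in># A" for x
      unfolding PA poly_prod_mset by (auto simp: image_iff)
    finally show ?thesis by auto
  qed
  have dP: "pderiv P = -1"
    using N0 by (simp add: P_def pderiv_monom pderiv_diff pderiv_pCons one_pCons)
  have cnt: "count A a \<le> 1" for a
  proof (rule ccontr)
    assume "\<not> count A a \<le> 1"
    hence "a \<in># A" by (metis count_inI not_le_imp_less not_less_zero less_imp_le)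
    then obtain A1 where A1: "A = add_mset a A1" by (metis multi_member_split)
    have "count A1 a \<ge> 1" using \<open>\<not> count A a \<le> 1\<close> A1 by simp
    hence "a \<in># A1" by (auto simp: count_eq_zero_iff[symmetric])
    then obtain A2 where A2: "A1 = add_mset a A2" by (metis multi_member_split)
    define Q :: "'b poly" where "Q = [:-a, 1:]"
    define R where "R = (\<Prod>x\<in>#A2. [:-x, 1:])"
    have "P = Q * (Q * R)" unfolding PA A1 A2 Q_def R_def by (simp add: mult.assoc)
    hence "pderiv P = Q * pderiv (Q * R) + (Q * R) * pderiv Q" by (simp add: pderiv_mult)
    hence "poly (pderiv P) a = 0" by (simp add: Q_def)
    thus False using dP by simp
  qed
  have "A = mset_set (set_mset A)"
  proof (rule multiset_eqI)
    fix a show "count A a = count (mset_set (set_mset A)) a"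
      using cnt[of a] by (cases "a \<in># A") (auto simp: le_Suc_eq not_in_iff dest: count_eq_zero_iff[THEN iffD1])
  qed
  hence "card (set_mset A) = size A" by (metis size_mset_set)
  thus ?thesis using roots A(1) by simp
qed

abbreviation qq :: "'a::{finite,field} itself \<Rightarrow> nat" where
  "qq _ \<equiv> card (UNIV :: 'a set)"

lemma ac_frob_add:
  fixes x y :: "'a::{finite,field} alg_closure"
  shows "(x + y) ^ card (UNIV :: 'a set) = x ^ card (UNIV :: 'a set) + y ^ card (UNIV :: 'a set)"
proof -
  obtain k where k: "card (UNIV :: 'a set) = CHAR('a) ^ k" using ff_card_prime_power by blast
  show ?thesis
    by (rule freshmans_dream'[where 'a="'a alg_closure"]) (simp_all add: ff_CHAR_prime k)
qed

lemma ac_frob_minus: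
  fixes x :: "'a::{finite,field} alg_closure"
  shows "(- x) ^ card (UNIV :: 'a set) = - (x ^ card (UNIV :: 'a set))"
proof -
  have "0 = (x + - x) ^ card (UNIV :: 'a set)" using ff_card_ge2[where 'a='a] by simp
  also have "\<dots> = x ^ card (UNIV :: 'a set) + (- x) ^ card (UNIV :: 'a set)" by (rule ac_frob_add)
  finally show ?thesis by (simp add: eq_neg_iff_add_eq_0 add.commute)
qed

lemma ac_of_nat_card:
  assumes "m > 0"
  shows "(of_nat (card (UNIV :: 'a set) ^ m) :: ('a::{finite,field}) alg_closure) = 0"
proof -
  obtain k where k: "card (UNIV :: 'a set) = CHAR('a) ^ k" using ff_card_prime_power by blast
  have "k > 0" using ff_card_ge2[where 'a='a] k by (cases k) auto
  have p0: "(of_nat CHAR('a) :: 'a alg_closure) = 0"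
    by (metis CHAR_alg_closure of_nat_CHAR)
  have "(of_nat (card (UNIV :: 'a set) ^ m) :: 'a alg_closure) = of_nat CHAR('a) ^ (k * m)"
    by (simp add: k power_mult)
  also have "\<dots> = 0" using p0 \<open>k > 0\<close> assms by simp
  finally show ?thesis .
qed

lemma ac_card_fixed:
  assumes "m > 0"
  shows "card {x :: ('a::{finite,field}) alg_closure. x ^ (card (UNIV :: 'a set) ^ m) = x}
          = card (UNIV :: 'a set) ^ m"
proof (rule card_roots_xN)
  have "2 \<le> card (UNIV :: 'a set)" by (rule ff_card_ge2)
  also have "\<dots> \<le> card (UNIV :: 'a set) ^ m" using assms
    by (metis One_nat_def Suc_leI power_increasing_iff power_one_right ff_card_ge2 less_le_trans one_less_numeral_iff semiring_norm(76) zero_less_iff_neq_zero  order_trans)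
  finally show "2 \<le> card (UNIV :: 'a set) ^ m" .
qed (rule ac_of_nat_card[OF assms])

lemma range_to_ac:
  "range (to_ac :: 'a::{finite,field} \<Rightarrow> _) = {x. x ^ card (UNIV :: 'a set) = x}"
proof (rule card_subset_eq)
  show "finite {x :: 'a alg_closure. x ^ card (UNIV :: 'a set) = x}"
    by (rule card_ge_0_finite) (use ac_card_fixed[of 1, where 'a='a] ff_card_ge2[where 'a='a] in simp)
  show "range to_ac \<subseteq> {x :: 'a alg_closure. x ^ card (UNIV :: 'a set) = x}"
    by (auto simp flip: to_ac_power simp: ff_pow_card)
  show "card (range (to_ac :: 'a \<Rightarrow> _)) = card {x :: 'a alg_closure. x ^ card (UNIV :: 'a set) = x}"
    using ac_card_fixed[of 1, where 'a='a] by (simp add: card_image inj_to_ac)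
qed

lemma funpow_frob: "((\<lambda>x. x ^ N) ^^ m) (x :: 'b :: monoid_mult) = x ^ (N ^ m)"
  by (induction m) (simp_all flip: power_mult add: mult.commute)


lemma count_cycles:
  fixes F :: "'b \<Rightarrow> 'b" and \<tau> :: "'c \<Rightarrow> 'c" and Q :: nat
  assumes "finite A" "\<tau> permutes A"
    and fixpts: "\<And>m. m > 0 \<Longrightarrow> card {x. (F ^^ m) x = x} = Q ^ m"
  shows "card {z \<in> PiE A (\<lambda>_. UNIV). \<forall>j\<in>A. F (z j) = z (\<tau> j)} = Q ^ card A"
  using assms(1,2)
proof (induction "card A" arbitrary: A \<tau> rule: less_induct)
  case less
  show ?case
  proof (cases "A = {}")
    case True
    then show ?thesis by simp
  next
    case False
    then obtain a where aA: "a \<in> A" by auto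
    have perm: "permutation \<tau>" using less.prems by (auto simp: permutation_permutes)
    define Orb where "Orb = orbit \<tau> a"
    define L where "L = funpow_dist1 \<tau> a a"
    have aO: "a \<in> Orb" unfolding Orb_def by (rule permutation_self_in_orbit[OF perm])
    have OA: "Orb \<subseteq> A" unfolding Orb_def by (rule permutes_orbit_subset[OF less.prems(2) aA])
    have Oeq: "Orb = (\<lambda>n. (\<tau> ^^ n) a) ` {0..<L}"
      unfolding Orb_def L_def by (rule orbit_conv_funpow_dist1[OF aO[unfolded Orb_def]])
    have injO: "inj_on (\<lambda>n. (\<tau> ^^ n) a) {0..<L}"
      unfolding L_def by (rule inj_on_funpow_dist1[OF aO[unfolded Orb_def]])
    have cardOrb: "card Orb = L" using Oeq injO by (simp add: card_image)
    have tauL: "(\<tau> ^^ L) a = a" unfolding L_def by (rule funpow_dist1_prop[OF aO[unfolded Orb_def]])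
    have Lpos: "L > 0" unfolding L_def by simp
    define B where "B = A - Orb"
    have cyc: "cyclic_on \<tau> Orb" unfolding Orb_def by (rule cyclic_on_orbit'[OF perm])
    have permB: "perm_restrict \<tau> B permutes B"
      unfolding B_def by (rule perm_restrict_diff_cyclic[OF less.prems(2) cyc])
    have tauB: "\<tau> j \<in> B" if "j \<in> B" for j
      using permutes_in_image[OF permB, of j] that by (simp add: perm_restrict_simps)
    have tauO: "\<tau> j \<in> Orb" if "j \<in> Orb" for j
      using that unfolding Orb_def by (rule orbit.step)
    have powO: "(\<tau> ^^ i) a \<in> Orb" for i
      unfolding Orb_def by (rule funpow_in_orbit[OF aO[unfolded Orb_def]])
    have cardB: "card B < card A" unfolding B_def
      using aO aA OA less.prems(1) by (intro psubset_card_mono) auto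
    have cardA: "card A = card B + L"
      unfolding B_def using OA less.prems(1) cardOrb
      by (metis card_Diff_subset card_mono finite_subset le_add_diff_inverse2)
    define SB where "SB = {z \<in> PiE B (\<lambda>_. UNIV). \<forall>j\<in>B. F (z j) = z (\<tau> j)}"
    have "SB = {z \<in> PiE B (\<lambda>_. UNIV). \<forall>j\<in>B. F (z j) = z (perm_restrict \<tau> B j)}"
      unfolding SB_def by (auto simp: perm_restrict_simps)
    hence cardSB: "card SB = Q ^ card B"
      using less.hyps[OF cardB _ permB] less.prems(1) B_def by simp
    define Xf where "Xf = {x. (F ^^ L) x = x}"
    have cardXf: "card Xf = Q ^ L" unfolding Xf_def by (rule fixpts[OF Lpos])
    have wd: "(F ^^ i) x = (F ^^ k) x" if "(\<tau> ^^ i) a = (\<tau> ^^ k) a" "x \<in> Xf" for i k x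
    proof -
      have "(\<tau> ^^ (i mod L)) a = (\<tau> ^^ (k mod L)) a"
        using that(1) by (simp add: funpow_mod_eq[OF tauL])
      hence "i mod L = k mod L" using injO Lpos by (auto dest: inj_onD)
      moreover have "(F ^^ (i mod L)) x = (F ^^ i) x" "(F ^^ (k mod L)) x = (F ^^ k) x"
        using that(2) by (auto simp: Xf_def funpow_mod_eq)
      ultimately show ?thesis by simp
    qed
    define SA where "SA = {z \<in> PiE A (\<lambda>_. UNIV). \<forall>j\<in>A. F (z j) = z (\<tau> j)}"
    have zpow: "z ((\<tau> ^^ i) a) = (F ^^ i) (z a)" if "z \<in> SA" for z i
    proof (induction i)
      case (Suc i)
      have "(\<tau> ^^ i) a \<in> A" using powO OA by auto
      hence "F (z ((\<tau> ^^ i) a)) = z (\<tau> ((\<tau> ^^ i) a))" using that by (auto simp: SA_def)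
      thus ?case using Suc by simp
    qed simp
    define g where "g = (\<lambda>z::'c\<Rightarrow>'b. (restrict z B, z a))"
    define h where "h = (\<lambda>(w::'c\<Rightarrow>'b, x::'b). (\<lambda>j. if j \<in> B then w j else if j \<in> Orb then (F ^^ funpow_dist \<tau> a j) x else undefined))"
    have distO: "(\<tau> ^^ funpow_dist \<tau> a j) a = j" if "j \<in> Orb" for j
      using that unfolding Orb_def by (rule funpow_dist_prop)
    have "bij_betw g SA (SB \<times> Xf)"
    proof (rule bij_betw_byWitness[where f'=h])
      show "\<forall>z\<in>SA. h (g z) = z"
      proof
        fix z assume z: "z \<in> SA"
        show "h (g z) = z"
        proof
          fix j
          show "h (g z) j = z j"
          proof (cases "j \<in> B")
            case False
            show ?thesis
            proof (cases "j \<in> Orb")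
              case True
              have "z j = z ((\<tau> ^^ funpow_dist \<tau> a j) a)" using distO[OF True] by simp
              also have "\<dots> = (F ^^ funpow_dist \<tau> a j) (z a)" by (rule zpow[OF z])
              finally show ?thesis using False True by (simp add: g_def h_def)
            next
              case False': False
              hence "j \<notin> A" using False B_def by auto
              thus ?thesis using z False False' by (auto simp: g_def h_def SA_def PiE_def extensional_def)
            qed
          qed (simp add: g_def h_def)
        qed
      qed
    next
      show "\<forall>wx\<in>SB \<times> Xf. g (h wx) = wx"
      proof
        fix wx assume "wx \<in> SB \<times> Xf"
        then obtain w x where wx: "wx = (w, x)" "w \<in> SB" "x \<in> Xf" by auto
        have "restrict (h (w, x)) B = w"
          using wx(2) by (auto simp: h_def SB_def PiE_def extensional_def restrict_def)
        moreover have "h (w, x) a = x" using aO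
          by (auto simp: h_def B_def funpow_dist_0)
        ultimately show "g (h wx) = wx" by (simp add: g_def wx(1))
      qed
    next
      show "g ` SA \<subseteq> SB \<times> Xf"
      proof
        fix y assume "y \<in> g ` SA"
        then obtain z where z: "z \<in> SA" "y = g z" by auto
        have "restrict z B \<in> SB"
          using z(1) tauB by (auto simp: SA_def SB_def B_def)
        moreover have "z a \<in> Xf"
          using zpow[OF z(1), of L] tauL by (simp add: Xf_def)
        ultimately show "y \<in> SB \<times> Xf" by (simp add: z(2) g_def)
      qed
    next
      show "h ` (SB \<times> Xf) \<subseteq> SA"
      proof
        fix y assume "y \<in> h ` (SB \<times> Xf)"
        then obtain w x where wx: "w \<in> SB" "x \<in> Xf" "y = h (w, x)" by auto
        have ext: "y \<in> PiE A (\<lambda>_. UNIV)"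
          using OA by (auto simp: wx(3) h_def B_def PiE_def extensional_def)
        have "F (y j) = y (\<tau> j)" if jA: "j \<in> A" for j
        proof (cases "j \<in> B")
          case True
          thus ?thesis using wx(1) tauB[OF True] by (auto simp: wx(3) h_def SB_def)
        next
          case False
          hence jO: "j \<in> Orb" using jA B_def by auto
          have tjB: "\<tau> j \<notin> B" using tauO[OF jO] B_def by auto
          have "(\<tau> ^^ Suc (funpow_dist \<tau> a j)) a = (\<tau> ^^ funpow_dist \<tau> a (\<tau> j)) a"
            using distO[OF jO] distO[OF tauO[OF jO]] by simp
          hence "(F ^^ Suc (funpow_dist \<tau> a j)) x = (F ^^ funpow_dist \<tau> a (\<tau> j)) x"
            by (rule wd[OF _ wx(2)])
          thus ?thesis using False jO tjB tauO[OF jO] by (simp add: wx(3) h_def)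
        qed
        thus "y \<in> SA" using ext by (simp add: SA_def)
      qed
    qed
    hence "card SA = card (SB \<times> Xf)" by (rule bij_betw_same_card)
    also have "\<dots> = Q ^ card A" by (simp add: card_cartesian_product cardSB cardXf cardA power_add)
    finally show ?thesis unfolding SA_def .
  qed
qed


lemma map_poly_add_hom:
  assumes "\<And>x y. f (x + y) = f x + f y" "f 0 = 0"
  shows "map_poly f (p + q) = map_poly f p + map_poly f q"
  by (intro poly_eqI) (simp add: coeff_map_poly assms)

lemma map_poly_diff_hom:
  assumes "\<And>x y. f (x - y) = f x - f y" "f 0 = 0"
  shows "map_poly f (p - q) = map_poly f p - map_poly f q"
  by (intro poly_eqI) (simp add: coeff_map_poly assms)

lemma map_poly_linear_prod:
  fixes f :: "'b::comm_ring_1 \<Rightarrow> 'b"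
  assumes add: "\<And>x y. f (x + y) = f x + f y" and mult: "\<And>x y. f (x * y) = f x * f y"
    and f0: "f 0 = 0" and f1: "f 1 = 1" and fm: "\<And>x. f (- x) = - f x"
  shows "map_poly f (\<Prod>i\<in>I. [:- w i, 1:]) = (\<Prod>i\<in>I. [:- f (w i), 1:])"
proof (induction I rule: infinite_finite_induct)
  case (infinite I) thus ?case using f1 by simp
next
  case empty thus ?case using f1 by simp
next
  case (insert i I)
  have fd: "f (x - y) = f x - f y" for x y using add fm by (metis diff_conv_add_uminus)
  have "map_poly f ([:- w i, 1:] * (\<Prod>i\<in>I. [:- w i, 1:]))
        = [:- f (w i), 1:] * map_poly f (\<Prod>i\<in>I. [:- w i, 1:])"
    by (simp add: map_poly_add_hom[OF add f0] map_poly_smult[OF f0 mult] map_poly_pCons[where f=f, OF f0] fm map_poly_diff_hom[OF fd f0] f0)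
  thus ?case using insert by simp
qed

lemma ac_frob_linear_prod:
  fixes w :: "'c \<Rightarrow> ('a::{finite,field}) alg_closure"
  shows "map_poly (\<lambda>x. x ^ card (UNIV :: 'a set)) (\<Prod>i\<in>I. [:- w i, 1:])
         = (\<Prod>i\<in>I. [:- (w i ^ card (UNIV :: 'a set)), 1:])"
  using ff_card_ge2[where 'a='a]
  by (intro map_poly_linear_prod) (simp_all add: ac_frob_add power_mult_distrib ac_frob_minus)

lemma monic_polys_finite: "finite (monic_polys n :: ('a::{finite,field}) poly set)"
proof -
  have "inj_on (\<lambda>p. restrict (coeff p) {..n}) (monic_polys n :: 'a poly set)"
  proof (rule inj_onI)
    fix p r :: "'a poly"
    assume *: "p \<in> monic_polys n" "r \<in> monic_polys n" "restrict (coeff p) {..n} = restrict (coeff r) {..n}"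
    show "p = r"
    proof (rule poly_eqI)
      fix k show "coeff p k = coeff r k"
      proof (cases "k \<le> n")
        case True thus ?thesis using *(3) by (metis atMost_iff restrict_apply')
      next
        case False thus ?thesis using *(1,2) by (simp add: monic_polys_def coeff_eq_0)
      qed
    qed
  qed
  moreover have "(\<lambda>p. restrict (coeff p) {..n}) ` (monic_polys n :: 'a poly set) \<subseteq> PiE {..n} (\<lambda>_. UNIV)"
    by (auto simp: PiE_def extensional_def)
  ultimately show ?thesis
    by (meson finite_PiE finite_atMost finite_UNIV finite_imageD finite_subset)
qed

lemma map_poly_to_ac_inj:
  "map_poly to_ac f = map_poly to_ac g \<Longrightarrow> f = (g :: 'a::field poly)"
  by (intro poly_eqI) (metis coeff_map_poly to_ac_0 to_ac_eq_iff)

lemma prod_linear_monic: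
  fixes z :: "nat \<Rightarrow> 'b::idom"
  shows "degree (\<Prod>i<n. [:- z i, 1:]) = n" "lead_coeff (\<Prod>i<n. [:- z i, 1:]) = 1"
  by (subst degree_prod_eq_sum_degree; simp) (simp add: lead_coeff_prod)

lemma root_tuples_finite:
  assumes "f \<in> monic_polys n"
  shows "finite (root_tuples n f)"
proof -
  have nz: "map_poly to_ac f \<noteq> 0"
    using assms by (auto simp: monic_polys_def map_poly_eq_0_iff)
  have "root_tuples n f \<subseteq> PiE {..<n} (\<lambda>_. {x. poly (map_poly to_ac f) x = 0})"
  proof
    fix z assume z: "z \<in> root_tuples n f"
    show "z \<in> PiE {..<n} (\<lambda>_. {x. poly (map_poly to_ac f) x = 0})"
    proof (rule PiE_I)
      fix j assume j: "j \<in> {..<n}"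
      have "poly (map_poly to_ac f) (z j) = (\<Prod>i<n. z j - z i)"
        using z by (simp add: root_tuples_def poly_prod)
      also have "\<dots> = 0" using j by (intro prod_zero) auto
      finally show "z j \<in> {x. poly (map_poly to_ac f) x = 0}" by simp
    qed (use z in \<open>auto simp: root_tuples_def\<close>)
  qed
  moreover have "finite (PiE {..<n} (\<lambda>_. {x. poly (map_poly to_ac f) x = 0}))"
    using nz by (intro finite_PiE) (auto intro: poly_roots_finite)
  ultimately show ?thesis by (rule finite_subset)
qed


lemma delta_char:
  assumes "z \<in> PiE {..<n} (\<lambda>_. UNIV)"
  shows "delta n \<sigma> (z :: nat \<Rightarrow> ('a::{finite,field}) alg_closure) =
    (if (\<forall>j\<in>{..<n}. z j ^ card (UNIV :: 'a set) = z (inv_into UNIV \<sigma> j)) then 1 else 0)"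
proof -
  have "((\<lambda>j\<in>{..<n}. z j ^ card (UNIV :: 'a set)) = perm_tuple n \<sigma> z) \<longleftrightarrow>
        (\<forall>j\<in>{..<n}. z j ^ card (UNIV :: 'a set) = z (inv_into UNIV \<sigma> j))"
    unfolding perm_tuple_def by (auto simp: fun_eq_iff restrict_def split: if_splits)
  thus ?thesis by (simp add: delta_def)
qed

definition Sset :: "nat \<Rightarrow> (nat \<Rightarrow> nat) \<Rightarrow> 'a itself \<Rightarrow> (nat \<Rightarrow> ('a::{finite,field}) alg_closure) set" where
  "Sset n \<sigma> _ = {z \<in> PiE {..<n} (\<lambda>_. UNIV). \<forall>j\<in>{..<n}. z j ^ card (UNIV :: 'a set) = z (inv_into UNIV \<sigma> j)}"

lemma card_Sset:
  assumes "\<sigma> permutes {..<n}"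
  shows "card (Sset n \<sigma> TYPE('a::{finite,field})) = card (UNIV :: 'a set) ^ n"
proof -
  have "card {z \<in> PiE {..<n} (\<lambda>_. UNIV). \<forall>j\<in>{..<n}.
          (\<lambda>x::'a alg_closure. x ^ card (UNIV :: 'a set)) (z j) = z (inv_into UNIV \<sigma> j)}
        = card (UNIV :: 'a set) ^ card {..<n}"
  proof (rule count_cycles)
    show "inv_into UNIV \<sigma> permutes {..<n}" by (rule permutes_inv[OF assms])
    show "card {x. ((\<lambda>x::'a alg_closure. x ^ card (UNIV :: 'a set)) ^^ m) x = x}
          = card (UNIV :: 'a set) ^ m" if "m > 0" for m
      unfolding funpow_frob by (rule ac_card_fixed[OF that])
  qed simp
  thus ?thesis by (simp add: Sset_def)
qed

lemma Sset_covered: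
  assumes "\<sigma> permutes {..<n}" "z \<in> Sset n \<sigma> TYPE('a::{finite,field})"
  shows "\<exists>f \<in> monic_polys n. z \<in> root_tuples n (f :: 'a poly)"
proof -
  define P where "P = (\<Prod>i<n. [:- z i, 1:])"
  have bij: "bij_betw (inv_into UNIV \<sigma>) {..<n} {..<n}"
    by (rule permutes_imp_bij[OF permutes_inv[OF assms(1)]])
  have "map_poly (\<lambda>x. x ^ card (UNIV :: 'a set)) P = (\<Prod>i<n. [:- (z i ^ card (UNIV :: 'a set)), 1:])"
    unfolding P_def by (rule ac_frob_linear_prod)
  also have "\<dots> = (\<Prod>i<n. [:- z (inv_into UNIV \<sigma> i), 1:])"
    using assms(2) by (intro prod.cong) (auto simp: Sset_def)
  also have "\<dots> = P" unfolding P_def by (rule prod.reindex_bij_betw[OF bij])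
  finally have fixP: "map_poly (\<lambda>x. x ^ card (UNIV :: 'a set)) P = P" .
  have crange: "coeff P k \<in> range to_ac" for k
  proof -
    have "coeff P k ^ card (UNIV :: 'a set) = coeff P k"
      using arg_cong[OF fixP, of "\<lambda>p. coeff p k"] ff_card_ge2[where 'a='a]
      by (simp add: coeff_map_poly)
    thus ?thesis by (simp add: range_to_ac)
  qed
  define f where "f = map_poly of_ac P"
  have mf: "map_poly to_ac f = P"
    by (intro poly_eqI) (simp add: f_def coeff_map_poly to_ac_of_ac crange)
  have degP: "degree P = n" and lcP: "lead_coeff P = 1"
    unfolding P_def by (rule prod_linear_monic)+
  have "degree f = degree (map_poly to_ac f)" by (rule degree_map_poly[symmetric]) simp
  hence degf: "degree f = n" using degP mf by simp
  have "to_ac (coeff f n) = coeff (map_poly to_ac f) n" by (simp add: coeff_map_poly)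
  also have "\<dots> = to_ac 1" using lcP degP mf by simp
  finally have "lead_coeff f = 1" using degf by simp
  hence "f \<in> monic_polys n" using degf by (simp add: monic_polys_def)
  moreover have "z \<in> root_tuples n f"
    using assms(2) mf by (auto simp: root_tuples_def Sset_def P_def)
  ultimately show ?thesis by blast
qed

lemma count_sigma:
  assumes "\<sigma> permutes {..<n}"
  shows "(\<Sum>f\<in>monic_polys n. \<Sum>z\<in>root_tuples n (f :: ('a::{finite,field}) poly). delta n \<sigma> z)
         = real (card (UNIV :: 'a set)) ^ n"
proof -
  define M where "M = (monic_polys n :: 'a poly set)"
  define U where "U = (\<Union>f\<in>M. root_tuples n f)"
  define S where "S = Sset n \<sigma> TYPE('a)"
  have finM: "finite M" unfolding M_def by (rule monic_polys_finite)
  have finR: "\<forall>f\<in>M. finite (root_tuples n f)" unfolding M_def using root_tuples_finite by blast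
  have disj: "\<forall>f\<in>M. \<forall>g\<in>M. f \<noteq> g \<longrightarrow> root_tuples n f \<inter> root_tuples n g = {}"
  proof (intro ballI impI)
    fix f g :: "'a poly" assume "f \<noteq> g"
    show "root_tuples n f \<inter> root_tuples n g = {}"
    proof (rule ccontr)
      assume "root_tuples n f \<inter> root_tuples n g \<noteq> {}"
      then obtain z where "z \<in> root_tuples n f" "z \<in> root_tuples n g" by blast
      hence "map_poly to_ac f = map_poly to_ac g" by (simp add: root_tuples_def)
      hence "f = g" by (rule map_poly_to_ac_inj)
      thus False using \<open>f \<noteq> g\<close> by simp
    qed
  qed
  have finU: "finite U" unfolding U_def using finM finR by blast
  have UPi: "U \<subseteq> PiE {..<n} (\<lambda>_. UNIV)" unfolding U_def by (auto simp: root_tuples_def)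
  have SU: "S \<subseteq> U" unfolding U_def S_def M_def using Sset_covered[OF assms] by blast
  have "(\<Sum>f\<in>M. \<Sum>z\<in>root_tuples n f. delta n \<sigma> z) = (\<Sum>z\<in>U. delta n \<sigma> z)"
    unfolding U_def by (rule sum.UNION_disjoint[OF finM finR disj, symmetric])
  also have "\<dots> = (\<Sum>z\<in>U. if z \<in> S then 1 else 0)"
  proof (rule sum.cong)
    fix z assume "z \<in> U"
    hence "z \<in> PiE {..<n} (\<lambda>_. UNIV)" using UPi by auto
    thus "delta n \<sigma> z = (if z \<in> S then 1 else 0)"
      by (simp add: delta_char S_def Sset_def)
  qed simp
  also have "\<dots> = (\<Sum>z\<in>U \<inter> S. 1)" by (rule sum.inter_restrict[OF finU, symmetric])
  also have "U \<inter> S = S" using SU by auto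
  also have "(\<Sum>z\<in>S. (1::real)) = real (card S)" by simp
  also have "card S = card (UNIV :: 'a set) ^ n" unfolding S_def by (rule card_Sset[OF assms])
  finally show ?thesis unfolding M_def by simp
qed

theorem proposition4p8:
  fixes n :: nat and \<phi> :: "('a::{finite,field}) poly \<Rightarrow> real" and c :: "(nat \<Rightarrow> nat) \<Rightarrow> real"
  assumes "n \<ge> 1"
    and "von_mangoldt_type n \<phi> c"
  shows "(\<Sum>f\<in>monic_polys n. \<phi> f) =
         (\<Sum>\<sigma>\<in>{\<sigma>. \<sigma> permutes {..<n}}. c \<sigma> * real (card (UNIV :: 'a set)) ^ n)"
proof -
  have "(\<Sum>f\<in>monic_polys n. \<phi> f) =
        (\<Sum>f\<in>(monic_polys n :: 'a poly set). \<Sum>z\<in>root_tuples n f. \<Sum>\<sigma>\<in>{\<sigma>. \<sigma> permutes {..<n}}. c \<sigma> * delta n \<sigma> z)"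
    using assms(2) unfolding von_mangoldt_type_def by simp
  also have "\<dots> = (\<Sum>f\<in>(monic_polys n :: 'a poly set). \<Sum>\<sigma>\<in>{\<sigma>. \<sigma> permutes {..<n}}. \<Sum>z\<in>root_tuples n f. c \<sigma> * delta n \<sigma> z)"
    by (intro sum.cong refl sum.swap)
  also have "\<dots> = (\<Sum>\<sigma>\<in>{\<sigma>. \<sigma> permutes {..<n}}. \<Sum>f\<in>(monic_polys n :: 'a poly set). \<Sum>z\<in>root_tuples n f. c \<sigma> * delta n \<sigma> z)"
    by (rule sum.swap)
  also have "\<dots> = (\<Sum>\<sigma>\<in>{\<sigma>. \<sigma> permutes {..<n}}. c \<sigma> * real (card (UNIV :: 'a set)) ^ n)"
  proof (rule sum.cong)
    fix \<sigma> assume "\<sigma> \<in> {\<sigma>. \<sigma> permutes {..<n}}"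
    hence "\<sigma> permutes {..<n}" by simp
    thus "(\<Sum>f\<in>(monic_polys n :: 'a poly set). \<Sum>z\<in>root_tuples n f. c \<sigma> * delta n \<sigma> z) = c \<sigma> * real (card (UNIV :: 'a set)) ^ n"
      by (simp add: sum_distrib_left[symmetric] count_sigma)
  qed simp
  finally show ?thesis .
qed

end
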